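(* Let $(Q,\mathcal M)$ be a modulated quiver with $Q$ connected, and suppose that every connected component of its complex quiver $\Gamma$ is one-cycle. Then: (1) $Q$ contains at most one cycle; (2) if $Q$ is a tree, then $Q$ contains a chain $v_1-v_2-\cdots-v_n$ with $n\ge2$ such that $\mathcal M(v_1)\ne\mathbb C$, $\mathcal M(v_n)\ne\mathbb C$ and $\mathcal M(v_i)=\mathbb C$ for all $2\le i\le n-1$.
   Context: Quivers $Q=(Q_0,Q_1,s,t)$ are finite; an arrow $\alpha$ goes from $s(\alpha)$ to $t(\alpha)$. A chain in a quiver is a sequence of vertices $u_1-u_2-\cdots-u_n$ together with pairwise distinct arrows $a_1,\dots,a_{n-1}$ such that each $a_k$ goes from $u_k$ to $u_{k+1}$ or from $u_{k+1}$ to $u_k$. A cycle is a cycle (loops included) of the underlying unoriented multigraph; $Q$ is a tree if its underlying graph is a tree. A connected quiver is one-cycle if its underlying (unoriented multi)graph, loops included, contains exactly one cycle. A modulation $\mathcal M$ of $Q$ assigns to each vertex $i$ a division ring $\mathcal M(i)\in\{\mathbb R,\mathbb C,\mathbb H\}$ ($\mathbb H$ the real quaternions) and to each arrow $\alpha$ a simple $\mathcal M(t(\alpha))$-$\mathcal M(s(\alpha))$-bimodule $\mathcal M(\alpha)$ on which $\mathbb R$ acts centrally; $(Q,\mathcal M)$ is a modulated quiver. Up to isomorphism there is exactly one such simple bimodule for each pair of these division rings other than $(\mathbb C,\mathbb C)$, and for $(\mathbb C,\mathbb C)$ there are exactly two: $\mathbb C$ with action $a\cdot z\cdot b=azb$,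 and $\overline{\mathbb C}$, which is $\mathbb C$ as a set with action $a\cdot z\cdot b=az\bar b$. The quiver $\Gamma$ of $(Q,\mathcal M)$: each $i\in Q_0$ with $\mathcal M(i)\in\{\mathbb R,\mathbb H\}$ gives one vertex $i$ of $\Gamma$; each $i$ with $\mathcal M(i)=\mathbb C$ gives two vertices $i,\bar i$. Each arrow $\alpha:i\to j$ of $Q$ gives arrows of $\Gamma$ as follows: if $\mathcal M(i)=\mathcal M(j)\in\{\mathbb R,\mathbb H\}$, one arrow $\alpha:i\to j$; if $\mathcal M(i)=\mathbb C$ and $\mathcal M(j)\in\{\mathbb R,\mathbb H\}$, arrows $\alpha:i\to j$, $\bar\alpha:\bar i\to j$; if $\mathcal M(i)\in\{\mathbb R,\mathbb H\}$ and $\mathcal M(j)=\mathbb C$, arrows $\alpha:i\to j$, $\bar\alpha:i\to\bar j$; if $\{\mathcal M(i),\mathcal M(j)\}=\{\mathbb R,\mathbb H\}$, two arrows $\alpha,\bar\alpha:i\to j$; if $\mathcal M(i)=\mathcal M(j)=\mathbb C$ and $\mathcal M(\alpha)=\mathbb C$, arrows $\alpha:i\to j$, $\bar\alpha:\bar i\to\bar j$; if $\mathcal M(i)=\mathcal M(j)=\mathbb C$ and $\mathcal M(\alpha)=\overline{\mathbb C}$, arrows $\alpha:\bar i\to j$, $\bar\alpha:i\to\bar j$. *)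

theory Defs
  imports Main
begin

datatype divring = RR | CC | HH

definition quiver :: "'v set \<Rightarrow> 'a set \<Rightarrow> ('a \<Rightarrow> 'v) \<Rightarrow> ('a \<Rightarrow> 'v) \<Rightarrow> bool" where
  "quiver V A s t \<longleftrightarrow> finite V \<and> finite A \<and> (\<forall>a\<in>A. s a \<in> V \<and> t a \<in> V)"

definition joins :: "('a \<Rightarrow> 'v) \<Rightarrow> ('a \<Rightarrow> 'v) \<Rightarrow> 'a \<Rightarrow> 'v \<Rightarrow> 'v \<Rightarrow> bool" where
  "joins s t a x y \<longleftrightarrow> (s a = x \<and> t a = y) \<or> (s a = y \<and> t a = x)"

definition adj :: "'a set \<Rightarrow> ('a \<Rightarrow> 'v) \<Rightarrow> ('a \<Rightarrow> 'v) \<Rightarrow> ('v \<times> 'v) set" where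
  "adj A s t = {(s a, t a) | a. a \<in> A} \<union> {(t a, s a) | a. a \<in> A}"

definition connected_quiver :: "'v set \<Rightarrow> 'a set \<Rightarrow> ('a \<Rightarrow> 'v) \<Rightarrow> ('a \<Rightarrow> 'v) \<Rightarrow> bool" where
  "connected_quiver V A s t \<longleftrightarrow> V \<noteq> {} \<and> (\<forall>u\<in>V. \<forall>v\<in>V. (u, v) \<in> (adj A s t)\<^sup>*)"

text \<open>A cycle of the underlying multigraph (loops included), identified with its set of arrows:
  a closed walk through k \<ge> 1 pairwise distinct vertices using k pairwise distinct arrows.\<close>
definition is_cycle :: "'v set \<Rightarrow> 'a set \<Rightarrow> ('a \<Rightarrow> 'v) \<Rightarrow> ('a \<Rightarrow> 'v) \<Rightarrow> 'a set \<Rightarrow> bool" where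
  "is_cycle V A s t C \<longleftrightarrow> (\<exists>us as. length us \<ge> 1 \<and> length as = length us \<and>
      distinct us \<and> distinct as \<and> set us \<subseteq> V \<and> set as \<subseteq> A \<and> set as = C \<and>
      (\<forall>i < length us. joins s t (as ! i) (us ! i) (us ! ((i + 1) mod length us))))"

definition one_cycle :: "'v set \<Rightarrow> 'a set \<Rightarrow> ('a \<Rightarrow> 'v) \<Rightarrow> ('a \<Rightarrow> 'v) \<Rightarrow> bool" where
  "one_cycle V A s t \<longleftrightarrow> connected_quiver V A s t \<and> (\<exists>!C. is_cycle V A s t C)"

definition is_tree :: "'v set \<Rightarrow> 'a set \<Rightarrow> ('a \<Rightarrow> 'v) \<Rightarrow> ('a \<Rightarrow> 'v) \<Rightarrow> bool" where
  "is_tree V A s t \<longleftrightarrow> connected_quiver V A s t \<and> (\<forall>C. \<not> is_cycle V A s t C)"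

definition is_chain :: "'v set \<Rightarrow> 'a set \<Rightarrow> ('a \<Rightarrow> 'v) \<Rightarrow> ('a \<Rightarrow> 'v) \<Rightarrow> 'v list \<Rightarrow> 'a list \<Rightarrow> bool" where
  "is_chain V A s t us as \<longleftrightarrow> us \<noteq> [] \<and> length as = length us - 1 \<and> distinct as \<and>
      set us \<subseteq> V \<and> set as \<subseteq> A \<and>
      (\<forall>i < length as. joins s t (as ! i) (us ! i) (us ! (i + 1)))"

definition comp_vertices :: "'v set \<Rightarrow> 'a set \<Rightarrow> ('a \<Rightarrow> 'v) \<Rightarrow> ('a \<Rightarrow> 'v) \<Rightarrow> 'v \<Rightarrow> 'v set" where
  "comp_vertices V A s t v = {w \<in> V. (v, w) \<in> (adj A s t)\<^sup>*}"

definition comp_arrows :: "'v set \<Rightarrow> 'a set \<Rightarrow> ('a \<Rightarrow> 'v) \<Rightarrow> ('a \<Rightarrow> 'v) \<Rightarrow> 'v \<Rightarrow> 'a set" where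
  "comp_arrows V A s t v = {a \<in> A. s a \<in> comp_vertices V A s t v}"

text \<open>Modulation: Mv assigns the division ring to each vertex; Mconj \<alpha> says that the simple
  bimodule on a C-C arrow \<alpha> is the conjugate one (otherwise it is C). For all other pairs of
  division rings the simple bimodule is unique up to isomorphism, so Mconj is ignored there.

  Quiver \<Gamma>: vertices (i,False) for every i, and (i,True) (= \<bar>i) when Mv i = CC.
  Arrows (\<alpha>,False) (= \<alpha>) and (\<alpha>,True) (= \<bar>\<alpha>); the latter exists unless both ends carry the
  same ring in {R,H}.\<close>
definition gamma_vertices :: "'v set \<Rightarrow> ('v \<Rightarrow> divring) \<Rightarrow> ('v \<times> bool) set" where
  "gamma_vertices V Mv = {(i, False) | i. i \<in> V} \<union> {(i, True) | i. i \<in> V \<and> Mv i = CC}"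

definition gamma_arrows :: "'a set \<Rightarrow> ('a \<Rightarrow> 'v) \<Rightarrow> ('a \<Rightarrow> 'v) \<Rightarrow> ('v \<Rightarrow> divring) \<Rightarrow> ('a \<times> bool) set" where
  "gamma_arrows A s t Mv = {(\<alpha>, False) | \<alpha>. \<alpha> \<in> A} \<union>
     {(\<alpha>, True) | \<alpha>. \<alpha> \<in> A \<and> \<not> (Mv (s \<alpha>) = Mv (t \<alpha>) \<and> Mv (s \<alpha>) \<noteq> CC)}"

definition gamma_src :: "('a \<Rightarrow> 'v) \<Rightarrow> ('a \<Rightarrow> 'v) \<Rightarrow> ('v \<Rightarrow> divring) \<Rightarrow> ('a \<Rightarrow> bool)
    \<Rightarrow> 'a \<times> bool \<Rightarrow> 'v \<times> bool" where
  "gamma_src s t Mv Mconj = (\<lambda>(\<alpha>, b).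
     (s \<alpha>, if Mv (s \<alpha>) \<noteq> CC then False
           else if Mv (t \<alpha>) \<noteq> CC then b
           else if Mconj \<alpha> then \<not> b else b))"

definition gamma_tgt :: "('a \<Rightarrow> 'v) \<Rightarrow> ('a \<Rightarrow> 'v) \<Rightarrow> ('v \<Rightarrow> divring) \<Rightarrow> ('a \<Rightarrow> bool)
    \<Rightarrow> 'a \<times> bool \<Rightarrow> 'v \<times> bool" where
  "gamma_tgt s t Mv Mconj = (\<lambda>(\<alpha>, b).
     (t \<alpha>, if Mv (t \<alpha>) \<noteq> CC then False else b))"

end

theory Submission
  imports Defs
begin

lemma joins_same_arrow:
  assumes "joins s t a x y" "joins s t a x' y'"
  shows "(x = x' \<and> y = y') \<or> (x = y' \<and> y = x')"
  using assms unfolding joins_def by auto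

lemma mod_window_inj:
  fixes i i' j k :: nat
  assumes "j \<le> i" "i < j + k" "j \<le> i'" "i' < j + k" "i mod k = i' mod k"
  shows "i = i'"
proof (rule ccontr)
  assume ne: "i \<noteq> i'"
  { fix a b :: nat assume h: "j \<le> a" "b < j+k" "a < b" "a mod k = b mod k"
    then have "k dvd (b - a)" by (metis mod_eq_dvd_iff_nat less_imp_le)
    moreover have "0 < b - a" "b - a < k" using h by auto
    ultimately have False using nat_dvd_not_less by blast }
  then show False using assms ne by (metis linorder_neqE_nat)
qed

lemma dvd_between:
  fixes d k :: nat
  assumes "k dvd d" "0 < d" "d < 2 * k" shows "d = k"
proof -
  obtain q where q: "d = k * q" using assms(1) by (auto elim: dvdE)
  have "q \<noteq> 0" using q assms by auto
  moreover have "q < 2" using q assms by (metis mult.commute mult_less_cancel2)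
  ultimately have "q = 1" by auto
  then show ?thesis using q by simp
qed

lemma closed_walk_cycle:
  assumes k: "k \<ge> 1" and closed: "p k = p 0"
    and V: "\<forall>i\<le>k. p i \<in> V" and Ar: "\<forall>i<k. a i \<in> A \<and> joins s t (a i) (p i) (p (Suc i))"
    and nb: "\<forall>i. Suc i < k \<longrightarrow> a i \<noteq> a (Suc i)"
  shows "\<exists>C. is_cycle V A s t C"
proof -
  define P where "P d \<longleftrightarrow> (\<exists>i. i + d \<le> k \<and> d \<ge> 1 \<and> p i = p (i + d))" for d
  have "P k" using k closed unfolding P_def by (intro exI[of _ 0]) auto
  define L where "L = (LEAST d. P d)"
  have PL: "P L" using \<open>P k\<close> unfolding L_def by (rule LeastI)
  have minL: "\<And>d. P d \<Longrightarrow> L \<le> d" unfolding L_def by (rule Least_le)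
  obtain i where i: "i + L \<le> k" "L \<ge> 1" "p i = p (i + L)" using PL P_def by auto
  have dist: "p (i+m) \<noteq> p (i+n)" if "m < n" "n < L" for m n
  proof
    assume "p (i+m) = p (i+n)"
    then have "P (n - m)" unfolding P_def using that i by (intro exI[of _ "i+m"]) auto
    then have "L \<le> n - m" by (rule minL)
    then show False using that by auto
  qed
  have dist': "p (i+m) \<noteq> p (i+n)" if "m \<noteq> n" "m < L" "n < L" for m n
    using dist that by (metis linorder_neqE_nat)
  define us where "us = map (\<lambda>m. p (i+m)) [0..<L]"
  define as where "as = map (\<lambda>m. a (i+m)) [0..<L]"
  have jn: "joins s t (a (i+m)) (p (i+m)) (p (i+m+1))" if "m < L" for m
    using Ar that i by auto
  have inja: "a (i+m) \<noteq> a (i+n)" if "m < n" "n < L" for m n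
  proof
    assume eq: "a (i+m) = a (i+n)"
    have jm: "joins s t (a (i+n)) (p (i+m)) (p (i+m+1))" using jn[of m] that eq by auto
    have jn': "joins s t (a (i+n)) (p (i+n)) (p (i+n+1))" using jn[of n] that by auto
    from joins_same_arrow[OF jm jn']
    have c: "(p (i+m) = p (i+n) \<and> p (i+m+1) = p (i+n+1)) \<or> (p (i+m) = p (i+n+1) \<and> p (i+m+1) = p (i+n))"
      by auto
    show False
    proof (cases "p (i+m) = p (i+n)")
      case True then show False using dist that by blast
    next
      case False
      with c have c1: "p (i+m) = p (i+n+1)" and c2: "p (i+m+1) = p (i+n)" by auto
      have "\<not> m + 1 < n" using c2 dist[of "m+1" n] that by auto
      then have n: "n = m + 1" using that by auto
      show False
      proof (cases "m + 2 < L")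
        case True
        then show False using c1 n dist[of m "m+2"] by (simp add: add.assoc)
      next
        case False
        then have L: "L = m + 2" using n that by auto
        then have "p (i+m) = p i" using c1 n i(3) by (simp add: add.assoc)
        show False
        proof (cases "m = 0")
          case True
          then have "Suc i < k" using L i by auto
          then show False using nb eq n True by auto
        next
          case False
          then show False using \<open>p (i+m) = p i\<close> dist[of 0 m] that by auto
        qed
      qed
    qed
  qed
  show ?thesis
  proof (intro exI[of _ "set as"], unfold is_cycle_def, intro exI[of _ us] exI[of _ as] conjI)
    show "length us \<ge> 1" using i by (simp add: us_def)
    show "length as = length us" by (simp add: us_def as_def)
    show "distinct us" unfolding us_def distinct_map inj_on_def
    proof (intro conjI ballI impI)
      fix m n assume "m \<in> set [0..<L]" "n \<in> set [0..<L]" "p (i+m) = p (i+n)"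
      then show "m = n" using dist' by force
    qed simp
    have inja': "a (i+m) \<noteq> a (i+n)" if "m \<noteq> n" "m < L" "n < L" for m n
      using inja that by (metis linorder_neqE_nat)
    show "distinct as" unfolding as_def distinct_map inj_on_def
    proof (intro conjI ballI impI)
      fix m n assume "m \<in> set [0..<L]" "n \<in> set [0..<L]" "a (i+m) = a (i+n)"
      then show "m = n" using inja' by force
    qed simp
    show "set us \<subseteq> V" using V i by (auto simp: us_def)
    show "set as \<subseteq> A" using Ar i by (auto simp: as_def)
    show "set as = set as" ..
    show "\<forall>m<length us. joins s t (as ! m) (us ! m) (us ! ((m + 1) mod length us))"
    proof (intro allI impI)
      fix m assume m: "m < length us"
      then have mL: "m < L" by (simp add: us_def)
      show "joins s t (as ! m) (us ! m) (us ! ((m + 1) mod length us))"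
      proof (cases "m + 1 < L")
        case True
        then show ?thesis using jn[OF mL] mL by (simp add: us_def as_def)
      next
        case False
        then have "m + 1 = L" using mL by auto
        then have "p (i + m + 1) = p i" using i(3) by (metis add.assoc)
        then show ?thesis using jn[OF mL] mL \<open>m + 1 = L\<close> by (simp add: us_def as_def)
      qed
    qed
  qed
qed


lemma walk_cycle_comp:
  assumes L: "L \<ge> 1" and closed: "x (j+L) = x j"
    and W: "\<forall>i. x i \<in> V \<and> e i \<in> A \<and> joins s t (e i) (x i) (x (Suc i))"
    and R: "\<forall>i. (z, x i) \<in> (adj A s t)\<^sup>*"
    and ix: "inj_on x {j..<j+L}" and ie: "inj_on e {j..<j+L}"
  shows "is_cycle (comp_vertices V A s t z) (comp_arrows V A s t z) s t (e ` {j..<j+L})"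
proof -
  define us where "us = map (\<lambda>m. x (j+m)) [0..<L]"
  define as where "as = map (\<lambda>m. e (j+m)) [0..<L]"
  have xin: "x i \<in> comp_vertices V A s t z" for i
    using W R unfolding comp_vertices_def by blast
  have ein: "e i \<in> comp_arrows V A s t z" for i
  proof -
    have j: "joins s t (e i) (x i) (x (Suc i))" using W by blast
    have "s (e i) = x i \<or> s (e i) = x (Suc i)" using j unfolding joins_def by blast
    then have "s (e i) \<in> comp_vertices V A s t z" using xin by metis
    moreover have "e i \<in> A" using W by blast
    ultimately show ?thesis unfolding comp_arrows_def by blast
  qed
  have im: "(\<lambda>m. m + j) ` {0..<L} = {j..<j+L}" by (simp add: add.commute)
  have seta: "set as = e ` {j..<j+L}" unfolding as_def im[symmetric] image_image
    by (simp add: add.commute)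
  have ix': "inj_on (\<lambda>m. x (j+m)) {0..<L}" using ix unfolding inj_on_def
    by (metis add_left_cancel add_less_cancel_left atLeastLessThan_iff atLeast0LessThan le_add1 lessThan_iff)
  have ie': "inj_on (\<lambda>m. e (j+m)) {0..<L}" using ie unfolding inj_on_def
    by (metis add_left_cancel add_less_cancel_left atLeastLessThan_iff atLeast0LessThan le_add1 lessThan_iff)
  show ?thesis
  proof (unfold is_cycle_def, intro exI[of _ us] exI[of _ as] conjI)
    show "length us \<ge> 1" using L by (simp add: us_def)
    show "length as = length us" by (simp add: us_def as_def)
    show "distinct us" unfolding us_def distinct_map using ix' by simp
    show "distinct as" unfolding as_def distinct_map using ie' by simp
    show "set us \<subseteq> comp_vertices V A s t z" using xin by (auto simp: us_def)
    show "set as \<subseteq> comp_arrows V A s t z" using ein by (auto simp: as_def)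
    show "set as = e ` {j..<j+L}" by (rule seta)
    show "\<forall>m<length us. joins s t (as ! m) (us ! m) (us ! ((m + 1) mod length us))"
    proof (intro allI impI)
      fix m assume m: "m < length us"
      then have mL: "m < L" by (simp add: us_def)
      have jm: "joins s t (e (j+m)) (x (j+m)) (x (Suc (j+m)))" using W by blast
      show "joins s t (as ! m) (us ! m) (us ! ((m + 1) mod length us))"
      proof (cases "m + 1 < L")
        case True
        then show ?thesis using jm mL by (simp add: us_def as_def)
      next
        case False
        then have mm: "m + 1 = L" using mL by auto
        then have "x (Suc (j+m)) = x j" using closed by (metis add_Suc_right Suc_eq_plus1)
        then show ?thesis using jm mL mm by (simp add: us_def as_def)
      qed
    qed
  qed
qed


definition lflag :: "('a \<Rightarrow> 'v) \<Rightarrow> ('a \<Rightarrow> 'v) \<Rightarrow> ('v \<Rightarrow> divring) \<Rightarrow> ('a \<Rightarrow> bool) \<Rightarrow> 'a \<Rightarrow> 'v \<Rightarrow> 'v \<Rightarrow> bool \<Rightarrow> bool" where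
 "lflag s t Mv Mconj \<alpha> u w \<beta> = (if s \<alpha> = u \<and> t \<alpha> = w
     then (if Mv (s \<alpha>) \<noteq> CC then False else if Mv (t \<alpha>) \<noteq> CC then \<beta> else (\<beta> \<noteq> Mconj \<alpha>))
     else (if Mv (t \<alpha>) \<noteq> CC then False else \<beta>))"

definition lnext :: "('a \<Rightarrow> 'v) \<Rightarrow> ('a \<Rightarrow> 'v) \<Rightarrow> ('v \<Rightarrow> divring) \<Rightarrow> ('a \<Rightarrow> bool) \<Rightarrow> 'a \<Rightarrow> 'v \<Rightarrow> 'v \<Rightarrow> bool \<Rightarrow> bool" where
 "lnext s t Mv Mconj \<alpha> u w \<beta> = (if s \<alpha> = u \<and> t \<alpha> = w
     then snd (gamma_tgt s t Mv Mconj (\<alpha>, lflag s t Mv Mconj \<alpha> u w \<beta>))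
     else snd (gamma_src s t Mv Mconj (\<alpha>, lflag s t Mv Mconj \<alpha> u w \<beta>)))"

lemma lift_step:
  assumes q: "quiver V A s t" and a: "\<alpha> \<in> A" and j: "joins s t \<alpha> u w"
    and u: "(u, \<beta>) \<in> gamma_vertices V Mv"
  shows "(\<alpha>, lflag s t Mv Mconj \<alpha> u w \<beta>) \<in> gamma_arrows A s t Mv"
    "(w, lnext s t Mv Mconj \<alpha> u w \<beta>) \<in> gamma_vertices V Mv"
    "joins (gamma_src s t Mv Mconj) (gamma_tgt s t Mv Mconj) (\<alpha>, lflag s t Mv Mconj \<alpha> u w \<beta>) (u, \<beta>) (w, lnext s t Mv Mconj \<alpha> u w \<beta>)"
proof -
  have wV: "w \<in> V" using q a j unfolding quiver_def joins_def by auto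
  have ub: "\<beta> \<longrightarrow> Mv u = CC" using u unfolding gamma_vertices_def by auto
  show "(\<alpha>, lflag s t Mv Mconj \<alpha> u w \<beta>) \<in> gamma_arrows A s t Mv"
    using a unfolding gamma_arrows_def lflag_def by auto
  show "(w, lnext s t Mv Mconj \<alpha> u w \<beta>) \<in> gamma_vertices V Mv"
    using wV j unfolding gamma_vertices_def lnext_def lflag_def gamma_src_def gamma_tgt_def joins_def
    by auto
  show "joins (gamma_src s t Mv Mconj) (gamma_tgt s t Mv Mconj) (\<alpha>, lflag s t Mv Mconj \<alpha> u w \<beta>) (u, \<beta>) (w, lnext s t Mv Mconj \<alpha> u w \<beta>)"
    using j ub unfolding lnext_def lflag_def gamma_src_def gamma_tgt_def joins_def
    by auto
qed

lemma joins_adj: "e \<in> A \<Longrightarrow> joins s t e x y \<Longrightarrow> (x, y) \<in> adj A s t"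
  unfolding adj_def joins_def by auto

lemma path_lift:
  assumes q: "quiver V A s t" and r: "(u, w) \<in> (adj A s t)\<^sup>*"
    and y: "y \<in> gamma_vertices V Mv" "fst y = u"
  shows "\<exists>y'. y' \<in> gamma_vertices V Mv \<and> fst y' = w \<and>
    (y, y') \<in> (adj (gamma_arrows A s t Mv) (gamma_src s t Mv Mconj) (gamma_tgt s t Mv Mconj))\<^sup>*"
  using r
proof (induction rule: rtrancl_induct)
  case base then show ?case using y by (intro exI[of _ y]) auto
next
  case (step w w')
  then obtain y' where y': "y' \<in> gamma_vertices V Mv" "fst y' = w"
    "(y, y') \<in> (adj (gamma_arrows A s t Mv) (gamma_src s t Mv Mconj) (gamma_tgt s t Mv Mconj))\<^sup>*"
    by blast
  from step(2) obtain \<alpha> where \<alpha>: "\<alpha> \<in> A" "joins s t \<alpha> w w'" unfolding adj_def joins_def by auto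
  obtain \<beta> where yb: "y' = (w, \<beta>)" using y' by (cases y') auto
  note ls = lift_step[OF q \<alpha>, of \<beta> Mv Mconj]
  have "((w, \<beta>), (w', lnext s t Mv Mconj \<alpha> w w' \<beta>)) \<in> adj (gamma_arrows A s t Mv) (gamma_src s t Mv Mconj) (gamma_tgt s t Mv Mconj)"
    using joins_adj[OF ls(1) ls(3)] y' yb by simp
  then show ?case using ls(2) y' yb by (intro exI[of _ "(w', lnext s t Mv Mconj \<alpha> w w' \<beta>)"]) auto
qed

lemma adj_walk:
  assumes "(u, w) \<in> (adj A s t)\<^sup>*"
  shows "\<exists>p a n. p 0 = u \<and> p n = w \<and> (\<forall>i<n. a i \<in> A \<and> joins s t (a i) (p i) (p (Suc i)))"
  using assms
proof (induction rule: rtrancl_induct)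
  case base then show ?case by (intro exI[of _ "\<lambda>_. u"] exI[of _ "\<lambda>_. undefined"] exI[of _ 0]) auto
next
  case (step w w')
  then obtain p a n where pan: "p 0 = u" "p n = w" "\<forall>i<n. a i \<in> A \<and> joins s t (a i) (p i) (p (Suc i))"
    by blast
  from step(2) obtain \<alpha> where \<alpha>: "\<alpha> \<in> A" "joins s t \<alpha> w w'" unfolding adj_def joins_def by auto
  define p' where "p' = p(Suc n := w')"
  define a' where "a' = a(n := \<alpha>)"
  have "\<forall>i<Suc n. a' i \<in> A \<and> joins s t (a' i) (p' i) (p' (Suc i))"
  proof (intro allI impI)
    fix i assume "i < Suc n"
    then consider "i < n" | "i = n" by linarith
    then show "a' i \<in> A \<and> joins s t (a' i) (p' i) (p' (Suc i))"
    proof cases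
      case 1 then show ?thesis using pan unfolding p'_def a'_def by auto
    next
      case 2 then show ?thesis using pan \<alpha> unfolding p'_def a'_def by auto
    qed
  qed
  then show ?case using pan unfolding p'_def by (intro exI[of _ p'] exI[of _ a'] exI[of _ "Suc n"]) (auto simp: p'_def)
qed

lemma gamma_proj_joins:
  "joins (gamma_src s t Mv Mconj) (gamma_tgt s t Mv Mconj) e y y' \<Longrightarrow> joins s t (fst e) (fst y) (fst y')"
  unfolding joins_def gamma_src_def gamma_tgt_def by (cases e) auto

lemma gamma_vert_CC: "(u, b) \<in> gamma_vertices V Mv \<Longrightarrow> (b \<longrightarrow> Mv u = CC) \<and> u \<in> V"
  unfolding gamma_vertices_def by auto

lemma gamma_arr_A: "e \<in> gamma_arrows A s t Mv \<Longrightarrow> fst e \<in> A"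
  unfolding gamma_arrows_def by auto

lemma backtrack_nonC:
  assumes "e \<noteq> e'" "fst e = fst e'" "s (fst e) \<noteq> t (fst e)"
    "joins (gamma_src s t Mv Mconj) (gamma_tgt s t Mv Mconj) e y1 y"
    "joins (gamma_src s t Mv Mconj) (gamma_tgt s t Mv Mconj) e' y y2"
  shows "Mv (fst y) \<noteq> CC"
  using assms unfolding joins_def gamma_src_def gamma_tgt_def
  by (cases e, cases e') (auto split: if_splits)

lemma mod_pair_k:
  fixes m m' k :: nat
  assumes "m < m'" "m' < 2 * k" "m mod k = m' mod k" shows "m' = k + m"
proof -
  have "k dvd (m' - m)" using assms by (metis mod_eq_dvd_iff_nat less_imp_le)
  then have "m' - m = k" using assms by (intro dvd_between) auto
  then show ?thesis using assms by auto
qed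

lemma cycle_lifts:
  assumes q: "quiver V A s t" and conn: "connected_quiver V A s t"
    and z: "z \<in> gamma_vertices V Mv"
    and C: "is_cycle V A s t C"
  shows "\<exists>D. is_cycle (comp_vertices (gamma_vertices V Mv) (gamma_arrows A s t Mv) (gamma_src s t Mv Mconj) (gamma_tgt s t Mv Mconj) z)
       (comp_arrows (gamma_vertices V Mv) (gamma_arrows A s t Mv) (gamma_src s t Mv Mconj) (gamma_tgt s t Mv Mconj) z)
       (gamma_src s t Mv Mconj) (gamma_tgt s t Mv Mconj) D \<and> fst ` D = C"
proof -
  let ?GV = "gamma_vertices V Mv" and ?GA = "gamma_arrows A s t Mv"
    and ?gs = "gamma_src s t Mv Mconj" and ?gt = "gamma_tgt s t Mv Mconj"
  obtain us as where cyc: "length us \<ge> 1" "length as = length us" "distinct us" "distinct as"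
    "set us \<subseteq> V" "set as \<subseteq> A" "set as = C"
    "\<forall>i<length us. joins s t (as ! i) (us ! i) (us ! ((i + 1) mod length us))"
    using C unfolding is_cycle_def by blast
  define k where "k = length us"
  have k: "k \<ge> 1" using cyc k_def by simp
  have kmod: "i mod k < k" for i using k by (intro mod_less_divisor) simp
  have kmu: "i mod k < length us" "i mod k < length as" for i using kmod k_def cyc(2) by auto
  define p where "p i = us ! (i mod k)" for i
  define a where "a i = as ! (i mod k)" for i
  have pV: "p i \<in> V" for i
  proof -
    have "i mod k < length us" using kmu by simp
    then show ?thesis using cyc(5) unfolding p_def by (meson nth_mem subsetD)
  qed
  have aA: "a i \<in> A" for i
  proof -
    have "i mod k < length as" using kmu by simp
    then show ?thesis using cyc(6) unfolding a_def by (meson nth_mem subsetD)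
  qed
  have aC: "a i \<in> C" for i
  proof -
    have "i mod k < length as" using kmu by simp
    then show ?thesis using cyc(7) unfolding a_def by (meson nth_mem)
  qed
  have pj: "joins s t (a i) (p i) (p (Suc i))" for i
  proof -
    have "i mod k < k" using kmod by simp
    then have "joins s t (as ! (i mod k)) (us ! (i mod k)) (us ! ((i mod k + 1) mod k))"
      using cyc(8) k_def by simp
    moreover have "(i mod k + 1) mod k = Suc i mod k" by (simp add: mod_Suc_eq)
    ultimately show ?thesis unfolding p_def a_def by simp
  qed
  have pper: "p (k + i) = p i" "a (k + i) = a i" for i by (simp_all add: p_def a_def)
  have pmod: "m mod k = m' mod k" if "p m = p m'" for m m'
  proof -
    have "m mod k < length us" "m' mod k < length us" using kmu by auto
    then show ?thesis using that cyc(3) unfolding p_def by (simp add: nth_eq_iff_index_eq)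
  qed
  have amod: "m mod k = m' mod k" if "a m = a m'" for m m'
  proof -
    have "m mod k < length as" "m' mod k < length as" using kmu by auto
    then show ?thesis using that cyc(4) unfolding a_def by (simp add: nth_eq_iff_index_eq)
  qed
  have pinj: "inj_on p {j..<j+k}" for j
  proof (rule inj_onI)
    fix m m' assume "m \<in> {j..<j+k}" "m' \<in> {j..<j+k}" "p m = p m'"
    then show "m = m'" using mod_window_inj[of j m k m'] pmod[of m m'] by auto
  qed
  have ainj: "inj_on a {j..<j+k}" for j
  proof (rule inj_onI)
    fix m m' assume "m \<in> {j..<j+k}" "m' \<in> {j..<j+k}" "a m = a m'"
    then show "m = m'" using mod_window_inj[of j m k m'] amod[of m m'] by auto
  qed
  have aimg: "a ` {j..<j+k} = C" for j
  proof (rule card_subset_eq)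
    show "finite C" using cyc(7) by auto
    show "a ` {j..<j+k} \<subseteq> C" using aC by auto
    have "card (a ` {j..<j+k}) = k" using card_image[OF ainj[of j]] by simp
    moreover have "card C = k" using cyc(7) cyc(4) cyc(2) k_def distinct_card by metis
    ultimately show "card (a ` {j..<j+k}) = card C" by simp
  qed
  have zV: "fst z \<in> V" using z gamma_vert_CC[of "fst z" "snd z" V Mv] by simp
  have "(fst z, p 0) \<in> (adj A s t)\<^sup>*" using conn zV pV unfolding connected_quiver_def by blast
  then obtain y0 where y0: "y0 \<in> ?GV" "fst y0 = p 0" "(z, y0) \<in> (adj ?GA ?gs ?gt)\<^sup>*"
    using path_lift[OF q _ z refl, where Mconj=Mconj] by blast
  define bs where "bs = rec_nat (snd y0) (\<lambda>i b. lnext s t Mv Mconj (a i) (p i) (p (Suc i)) b)"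
  have bs0: "bs 0 = snd y0" by (simp add: bs_def)
  have bsS: "bs (Suc i) = lnext s t Mv Mconj (a i) (p i) (p (Suc i)) (bs i)" for i
    by (simp add: bs_def)
  define x where "x i = (p i, bs i)" for i
  define e where "e i = (a i, lflag s t Mv Mconj (a i) (p i) (p (Suc i)) (bs i))" for i
  have x0: "x 0 = y0" using y0(2) bs0 unfolding x_def by (cases y0) simp
  have xV: "x i \<in> ?GV" for i
  proof (induction i)
    case 0 then show ?case using y0(1) x0 by simp
  next
    case (Suc i)
    then show ?case using lift_step(2)[OF q aA[of i] pj[of i], where \<beta>="bs i" and Mv=Mv and Mconj=Mconj] bsS x_def by simp
  qed
  have W: "\<forall>i. x i \<in> ?GV \<and> e i \<in> ?GA \<and> joins ?gs ?gt (e i) (x i) (x (Suc i))"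
  proof
    fix i
    have xi: "(p i, bs i) \<in> ?GV" using xV[of i] unfolding x_def .
    note ls = lift_step[OF q aA[of i] pj[of i] xi, where Mconj=Mconj]
    have 1: "e i \<in> ?GA" using ls(1) unfolding e_def .
    have 2: "joins ?gs ?gt (e i) (x i) (x (Suc i))" using ls(3) unfolding e_def x_def bsS .
    show "x i \<in> ?GV \<and> e i \<in> ?GA \<and> joins ?gs ?gt (e i) (x i) (x (Suc i))"
      using xV[of i] 1 2 by blast
  qed
  have R: "\<forall>i. (z, x i) \<in> (adj ?GA ?gs ?gt)\<^sup>*"
  proof
    fix i show "(z, x i) \<in> (adj ?GA ?gs ?gt)\<^sup>*"
    proof (induction i)
      case 0 then show ?case using y0(3) x0 by simp
    next
      case (Suc i)
      have w1: "e i \<in> ?GA" and w2: "joins ?gs ?gt (e i) (x i) (x (Suc i))" using W by blast+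
      have "(x i, x (Suc i)) \<in> adj ?GA ?gs ?gt" by (rule joins_adj[OF w1 w2])
      then show ?case by (rule rtrancl_into_rtrancl[OF Suc])
    qed
  qed
  have fx: "fst \<circ> x = p" and fe: "fst \<circ> e = a" by (auto simp: x_def e_def fun_eq_iff)
  have xinj: "inj_on x {j..<j+k}" for j using pinj[of j] fx inj_on_imageI2[of fst x] by simp
  have einj: "inj_on e {j..<j+k}" for j using ainj[of j] fe inj_on_imageI2[of fst e] by simp
  have img: "fst ` e ` S = a ` S" for S using fe image_comp[of fst e S] by simp
  show ?thesis
  proof (cases "\<exists>j<k. Mv (p j) \<noteq> CC")
    case True
    then obtain j where j: "Mv (p j) \<noteq> CC" by blast
    have "bs j = False" using xV[of j] j gamma_vert_CC[of "p j" "bs j" V Mv] unfolding x_def by blast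
    moreover have "p (j + k) = p j" using pper(1)[of j] by (simp add: add.commute)
    moreover have "bs (j + k) = False" using xV[of "j+k"] j \<open>p (j + k) = p j\<close>
       gamma_vert_CC[of "p (j+k)" "bs (j+k)" V Mv] unfolding x_def by auto
    ultimately have cl: "x (j + k) = x j" unfolding x_def by simp
    have "fst ` (e ` {j..<j+k}) = C" using img[of "{j..<j+k}"] aimg[of j] by simp
    with walk_cycle_comp[OF k cl W R xinj einj] show ?thesis by (intro exI[of _ "e ` {j..<j+k}"] conjI)
  next
    case False
    have allC: "Mv (p i) = CC" for i
    proof -
      have "p i = p (i mod k)" unfolding p_def by simp
      moreover have "i mod k < k" using kmod by simp
      ultimately show ?thesis using False by auto
    qed
    have sa: "(s (a i) = p i \<and> t (a i) = p (Suc i)) \<or> (s (a i) = p (Suc i) \<and> t (a i) = p i)" for i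
      using pj[of i] unfolding joins_def by blast
    have bsS': "bs (Suc i) = (bs i \<noteq> Mconj (a i))" for i
      using sa[of i] allC[of i] allC[of "Suc i"]
      unfolding bsS lnext_def lflag_def gamma_src_def gamma_tgt_def by auto
    have fl: "snd (e i) = (if s (a i) = p i \<and> t (a i) = p (Suc i) then bs i \<noteq> Mconj (a i) else bs i)" for i
      using sa[of i] allC[of i] allC[of "Suc i"] unfolding e_def lflag_def by auto
    have inv: "(bs (k + i) \<noteq> bs i) = (bs k \<noteq> bs 0)" for i
    proof (induction i)
      case 0 then show ?case by simp
    next
      case (Suc i)
      have "bs (k + Suc i) = (bs (k + i) \<noteq> Mconj (a i))" using bsS'[of "k+i"] pper by simp
      then show ?case using Suc bsS'[of i] by auto
    qed
    show ?thesis
    proof (cases "bs k = bs 0")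
      case True
      have cl: "x (0 + k) = x 0" using True pper[of 0] unfolding x_def by simp
      have "fst ` (e ` {0..<0+k}) = C" using img[of "{0..<0+k}"] aimg[of 0] by simp
      with walk_cycle_comp[OF k cl W R xinj[of 0] einj[of 0]] show ?thesis by (intro exI[of _ "e ` {0..<0+k}"] conjI)
    next
      case False
      have L2: "2 * k \<ge> 1" using k by simp
      have "bs (k + k) \<noteq> bs k" using inv[of k] False by simp
      then have "bs (2 * k) = bs 0" using False by (simp add: mult_2)
      moreover have "p (2 * k) = p 0" using pper[of k] pper[of 0] by (simp add: mult_2)
      ultimately have cl: "x (0 + 2 * k) = x 0" unfolding x_def by simp
      have key: "m' = k + m" if "m < m'" "m' < 2 * k" "fst (x m) = fst (x m') \<or> fst (e m) = fst (e m')" for m m'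
      proof -
        have "p m = p m' \<or> a m = a m'" using that(3) unfolding x_def e_def by simp
        then have "m mod k = m' mod k" using pmod[of m m'] amod[of m m'] by blast
        then show ?thesis using mod_pair_k that by blast
      qed
      have xneq: "x m \<noteq> x m'" if "m < m'" "m' < 2 * k" for m m'
        proof
          assume eq: "x m = x m'"
          then have "m' = k + m" using key[OF that(1,2)] by simp
          then show False using eq inv[of m] False unfolding x_def by simp
        qed
      have xi2: "inj_on x {0..<0 + 2 * k}"
      proof (rule inj_onI)
        fix m m' assume "m \<in> {0..<0 + 2 * k}" "m' \<in> {0..<0 + 2 * k}" "x m = x m'"
        then show "m = m'" using xneq[of m m'] xneq[of m' m] by (cases m m' rule: linorder_cases) auto
      qed
      have eneq: "e m \<noteq> e m'" if "m < m'" "m' < 2 * k" for m m'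
        proof
          assume eq: "e m = e m'"
          then have m': "m' = k + m" using key[OF that(1,2)] by simp
          have sn: "snd (e m) = snd (e (k + m))" using eq m' by simp
          have ps: "p (Suc (k + m)) = p (Suc m)" using pper[of "Suc m"] by simp
          have bd: "bs (k + m) \<noteq> bs m" using inv[of m] False by simp
          have fk: "snd (e (k + m)) = (if s (a m) = p m \<and> t (a m) = p (Suc m) then bs (k + m) \<noteq> Mconj (a m) else bs (k + m))"
            using fl[of "k+m"] ps pper(1)[of m] pper(2)[of m] by simp
          show False using sn fk fl[of m] bd by (cases "s (a m) = p m \<and> t (a m) = p (Suc m)") (simp_all, metis (full_types))
        qed
      have ei2: "inj_on e {0..<0 + 2 * k}"
      proof (rule inj_onI)
        fix m m' assume "m \<in> {0..<0 + 2 * k}" "m' \<in> {0..<0 + 2 * k}" "e m = e m'"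
        then show "m = m'" using eneq[of m m'] eneq[of m' m] by (cases m m' rule: linorder_cases) auto
      qed
      have "a ` {0..<0 + 2 * k} = C"
      proof
        show "a ` {0..<0 + 2 * k} \<subseteq> C" using aC by auto
        have "a ` {0..<0 + k} \<subseteq> a ` {0..<0 + 2 * k}" by auto
        then show "C \<subseteq> a ` {0..<0 + 2 * k}" using aimg[of 0] by simp
      qed
      then have "fst ` (e ` {0..<0 + 2 * k}) = C" using img[of "{0..<0 + 2 * k}"] by simp
      with walk_cycle_comp[OF L2 cl W R xi2 ei2] show ?thesis by (intro exI[of _ "e ` {0..<0 + 2 * k}"] conjI)
    qed
  qed
qed

lemma walk_pV:
  assumes q: "quiver V A s t" and w: "\<forall>i<n. a i \<in> A \<and> joins s t (a i) (p i) (p (Suc i))"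
    and i: "i \<le> n" and n: "n \<ge> 1"
  shows "p i \<in> V"
proof (cases "i < n")
  case True
  then have "a i \<in> A" "joins s t (a i) (p i) (p (Suc i))" using w by auto
  then show ?thesis using q unfolding quiver_def joins_def by auto
next
  case False
  then have ii: "i = Suc (n - 1)" using i n by auto
  have "n - 1 < n" using n by auto
  then have "a (n-1) \<in> A" "joins s t (a (n-1)) (p (n-1)) (p (Suc (n-1)))" using w by blast+
  then show ?thesis using q ii unfolding quiver_def joins_def by auto
qed

lemma chain_exists:
  assumes q: "quiver V A s t" and conn: "connected_quiver V A s t"
    and r: "r1 \<in> V" "r2 \<in> V" "r1 \<noteq> r2" "Mv r1 \<noteq> CC" "Mv r2 \<noteq> CC"
  shows "\<exists>us as. is_chain V A s t us as \<and> length us \<ge> 2 \<and>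
            Mv (hd us) \<noteq> CC \<and> Mv (last us) \<noteq> CC \<and>
            (\<forall>i. 1 \<le> i \<and> i < length us - 1 \<longrightarrow> Mv (us ! i) = CC)"
proof -
  define Good where "Good n \<longleftrightarrow> (\<exists>p a. Mv (p 0) \<noteq> CC \<and> Mv (p n) \<noteq> CC \<and> p 0 \<noteq> p n \<and>
      (\<forall>i<n. a i \<in> A \<and> joins s t (a i) (p i) (p (Suc i))))" for n
  have "(r1, r2) \<in> (adj A s t)\<^sup>*" using conn r(1,2) unfolding connected_quiver_def by blast
  from adj_walk[OF this] obtain p0 a0 n0 where w0: "p0 0 = r1" "p0 n0 = r2" "\<forall>i<n0. a0 i \<in> A \<and> joins s t (a0 i) (p0 i) (p0 (Suc i))"
    by blast
  have "Good n0" unfolding Good_def using r w0 by (intro exI[of _ p0] exI[of _ a0]) simp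
  define n where "n = (LEAST n. Good n)"
  have "Good n" unfolding n_def by (rule LeastI[where P=Good, OF \<open>Good n0\<close>])
  have minn: "\<And>m. Good m \<Longrightarrow> n \<le> m" unfolding n_def by (rule Least_le)
  obtain p a where pa: "Mv (p 0) \<noteq> CC" "Mv (p n) \<noteq> CC" "p 0 \<noteq> p n"
    and w: "\<forall>i<n. a i \<in> A \<and> joins s t (a i) (p i) (p (Suc i))"
    using \<open>Good n\<close> unfolding Good_def by blast
  have n1: "n \<ge> 1" using pa(3) by (cases n) auto
  have inj: "p i \<noteq> p j" if "i < j" "j \<le> n" for i j
  proof
    assume eq: "p i = p j"
    define d where "d = j - i"
    have d: "d > 0" "j = i + d" using that unfolding d_def by auto
    define p' where "p' m = (if m \<le> i then p m else p (m + d))" for m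
    define a' where "a' m = (if m < i then a m else a (m + d))" for m
    have "Good (n - d)" unfolding Good_def
    proof (intro exI[of _ p'] exI[of _ a'] conjI)
      have p'0: "p' 0 = p 0" unfolding p'_def by simp
      have p'n: "p' (n - d) = p n"
      proof (cases "n - d \<le> i")
        case True
        then have "j = n" using that d by auto
        then show ?thesis unfolding p'_def using True eq that d by auto
      next
        case False
        then show ?thesis unfolding p'_def using that d by auto
      qed
      show "Mv (p' 0) \<noteq> CC" "Mv (p' (n - d)) \<noteq> CC" "p' 0 \<noteq> p' (n - d)"
        using pa p'0 p'n by auto
      show "\<forall>m<n - d. a' m \<in> A \<and> joins s t (a' m) (p' m) (p' (Suc m))"
      proof (intro allI impI)
        fix m assume m: "m < n - d"
        consider "m < i" | "m = i" | "m > i" by linarith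
        then show "a' m \<in> A \<and> joins s t (a' m) (p' m) (p' (Suc m))"
        proof cases
          case 1
          then show ?thesis using w m unfolding p'_def a'_def by auto
        next
          case 2
          have jn: "j < n" using m 2 d by auto
          have "a j \<in> A \<and> joins s t (a j) (p j) (p (Suc j))" using w jn by blast
          moreover have "p' m = p j" "p' (Suc m) = p (Suc j)" "a' m = a j"
            unfolding p'_def a'_def using 2 eq d by auto
          ultimately show ?thesis by simp
        next
          case 3
          have "m + d < n" using m d by auto
          then have "a (m + d) \<in> A \<and> joins s t (a (m+d)) (p (m+d)) (p (Suc (m+d)))" using w by blast
          moreover have "p' m = p (m+d)" "p' (Suc m) = p (Suc (m + d))" "a' m = a (m+d)"
            unfolding p'_def a'_def using 3 by auto
          ultimately show ?thesis by simp
        qed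
      qed
    qed
    then have "n \<le> n - d" by (rule minn)
    then show False using d that by auto
  qed
  have inter: "Mv (p i) = CC" if "0 < i" "i < n" for i
  proof (rule ccontr)
    assume "Mv (p i) \<noteq> CC"
    then have "Good i" unfolding Good_def using pa(1) inj[of 0 i] that w
      by (intro exI[of _ p] exI[of _ a]) auto
    then show False using minn that by fastforce
  qed
  have adist: "a i \<noteq> a j" if "i < j" "j < n" for i j
  proof
    assume eq: "a i = a j"
    have "i < n" using that by simp
    then have "joins s t (a i) (p i) (p (Suc i))" using w by blast
    then have j1: "joins s t (a j) (p i) (p (Suc i))" using eq by simp
    have j2: "joins s t (a j) (p j) (p (Suc j))" using w that(2) by blast
    from joins_same_arrow[OF j1 j2] show False using inj[of i j] inj[of i "Suc j"] that by auto
  qed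
  define us where "us = map p [0..<Suc n]"
  define as where "as = map a [0..<n]"
  show ?thesis
  proof (intro exI[of _ us] exI[of _ as] conjI)
    show "is_chain V A s t us as" unfolding is_chain_def
    proof (intro conjI)
      show "us \<noteq> []" "length as = length us - 1" by (simp_all add: us_def as_def)
      show "distinct as" unfolding as_def distinct_map
      proof
        show "inj_on a (set [0..<n])"
        proof (rule inj_onI)
          fix i j assume "i \<in> set [0..<n]" "j \<in> set [0..<n]" "a i = a j"
          then show "i = j" using adist[of i j] adist[of j i] by (cases i j rule: linorder_cases) auto
        qed
      qed simp
      show "set us \<subseteq> V" unfolding us_def using walk_pV[OF q w _ n1] by auto
      show "set as \<subseteq> A" unfolding as_def using w by auto
      show "\<forall>i<length as. joins s t (as ! i) (us ! i) (us ! (i + 1))"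
        using w by (simp add: us_def as_def nth_append del: upt_Suc)
    qed
    show "length us \<ge> 2" using n1 by (simp add: us_def)
    show "Mv (hd us) \<noteq> CC" using pa by (simp add: us_def hd_map del: upt_Suc)
    show "Mv (last us) \<noteq> CC" using pa by (simp add: us_def last_map del: upt_Suc)
    show "\<forall>i. 1 \<le> i \<and> i < length us - 1 \<longrightarrow> Mv (us ! i) = CC"
      using inter by (auto simp: us_def nth_append simp del: upt_Suc)
  qed
qed

lemma tree_two_nonC:
  assumes q: "quiver V A s t" and conn: "connected_quiver V A s t"
    and tree: "\<forall>C. \<not> is_cycle V A s t C"
    and oc: "\<forall>x \<in> gamma_vertices V Mv.
           one_cycle
             (comp_vertices (gamma_vertices V Mv) (gamma_arrows A s t Mv)
                (gamma_src s t Mv Mconj) (gamma_tgt s t Mv Mconj) x)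
             (comp_arrows (gamma_vertices V Mv) (gamma_arrows A s t Mv)
                (gamma_src s t Mv Mconj) (gamma_tgt s t Mv Mconj) x)
             (gamma_src s t Mv Mconj) (gamma_tgt s t Mv Mconj)"
  shows "\<exists>r1 r2. r1 \<in> V \<and> r2 \<in> V \<and> r1 \<noteq> r2 \<and> Mv r1 \<noteq> CC \<and> Mv r2 \<noteq> CC"
proof (rule ccontr)
  let ?GV = "gamma_vertices V Mv" and ?GA = "gamma_arrows A s t Mv"
    and ?gs = "gamma_src s t Mv Mconj" and ?gt = "gamma_tgt s t Mv Mconj"
  assume nt: "\<not> ?thesis"
  have uniq: "r1 = r2" if "r1 \<in> V" "r2 \<in> V" "Mv r1 \<noteq> CC" "Mv r2 \<noteq> CC" for r1 r2
    using nt that by blast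
  obtain v0 where "v0 \<in> V" using conn unfolding connected_quiver_def by blast
  then have z: "(v0, False) \<in> ?GV" unfolding gamma_vertices_def by blast
  then have "one_cycle (comp_vertices ?GV ?GA ?gs ?gt (v0, False)) (comp_arrows ?GV ?GA ?gs ?gt (v0, False)) ?gs ?gt"
    using oc by blast
  then obtain D where "is_cycle (comp_vertices ?GV ?GA ?gs ?gt (v0, False)) (comp_arrows ?GV ?GA ?gs ?gt (v0, False)) ?gs ?gt D"
    unfolding one_cycle_def by blast
  then obtain us as where cyc: "length us \<ge> 1" "length as = length us" "distinct us" "distinct as"
    "set us \<subseteq> comp_vertices ?GV ?GA ?gs ?gt (v0, False)" "set as \<subseteq> comp_arrows ?GV ?GA ?gs ?gt (v0, False)"
    "\<forall>i<length us. joins ?gs ?gt (as ! i) (us ! i) (us ! ((i + 1) mod length us))"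
    unfolding is_cycle_def by blast
  have sub1: "comp_vertices ?GV ?GA ?gs ?gt (v0, False) \<subseteq> ?GV" unfolding comp_vertices_def by auto
  have sub2: "comp_arrows ?GV ?GA ?gs ?gt (v0, False) \<subseteq> ?GA" unfolding comp_arrows_def by auto
  define k where "k = length us"
  have k: "k \<ge> 1" using cyc k_def by simp
  have kmod: "i mod k < k" for i using k by (intro mod_less_divisor) simp
  have kmu: "i mod k < length us" "i mod k < length as" for i using kmod k_def cyc(2) by auto
  define x where "x i = us ! (i mod k)" for i
  define e where "e i = as ! (i mod k)" for i
  have xV: "x i \<in> ?GV" for i using cyc(5) sub1 kmu[of i] unfolding x_def by (meson nth_mem subsetD)
  have eA: "e i \<in> ?GA" for i using cyc(6) sub2 kmu[of i] unfolding e_def by (meson nth_mem subsetD)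
  have xj: "joins ?gs ?gt (e i) (x i) (x (Suc i))" for i
  proof -
    have "joins ?gs ?gt (as ! (i mod k)) (us ! (i mod k)) (us ! ((i mod k + 1) mod k))"
      using cyc(7) k_def kmod by simp
    moreover have "(i mod k + 1) mod k = Suc i mod k" by (simp add: mod_Suc_eq)
    ultimately show ?thesis unfolding x_def e_def by simp
  qed
  have xmod: "m mod k = m' mod k" if "x m = x m'" for m m'
    using that cyc(3) kmu unfolding x_def by (simp add: nth_eq_iff_index_eq)
  have emod: "m mod k = m' mod k" if "e m = e m'" for m m'
    using that cyc(4) kmu unfolding e_def by (simp add: nth_eq_iff_index_eq)
  have xper: "x (i mod k) = x i" for i unfolding x_def by simp
  define p where "p i = fst (x i)" for i
  define a where "a i = fst (e i)" for i
  have pj: "joins s t (a i) (p i) (p (Suc i))" for i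
    unfolding p_def a_def by (rule gamma_proj_joins[OF xj])
  have aA: "a i \<in> A" for i unfolding a_def by (rule gamma_arr_A[OF eA])
  have pV: "p i \<in> V" for i using gamma_vert_CC[of "fst (x i)" "snd (x i)" V Mv] xV[of i] unfolding p_def by simp
  have xF: "snd (x i) = False" if "Mv (p i) \<noteq> CC" for i
    using gamma_vert_CC[of "fst (x i)" "snd (x i)" V Mv] xV[of i] that unfolding p_def by auto
  have noloop: "s (a i) \<noteq> t (a i)" for i
  proof
    assume st: "s (a i) = t (a i)"
    have "s (a i) \<in> V" using q aA[of i] unfolding quiver_def by blast
    then have "is_cycle V A s t {a i}" unfolding is_cycle_def using aA[of i] st
      by (intro exI[of _ "[s (a i)]"] exI[of _ "[a i]"]) (simp add: joins_def)
    then show False using tree by blast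
  qed
  define j0 where "j0 = (if \<exists>j<k. Mv (p j) \<noteq> CC then (SOME j. j < k \<and> Mv (p j) \<noteq> CC) else 0)"
  have nb: "\<forall>i. Suc i < k \<longrightarrow> a (j0 + i) \<noteq> a (j0 + Suc i)"
  proof (intro allI impI)
    fix i assume i: "Suc i < k"
    show "a (j0 + i) \<noteq> a (j0 + Suc i)"
    proof
      assume eq: "a (j0 + i) = a (j0 + Suc i)"
      have ne: "e (j0 + i) \<noteq> e (j0 + Suc i)"
      proof
        assume "e (j0 + i) = e (j0 + Suc i)"
        then have "(j0 + i) mod k = (j0 + Suc i) mod k" by (rule emod)
        then show False using mod_window_inj[of j0 "j0+i" k "j0 + Suc i"] i by simp
      qed
      have j1: "joins ?gs ?gt (e (j0 + i)) (x (j0 + i)) (x (j0 + Suc i))" using xj[of "j0+i"] by simp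
      have j2: "joins ?gs ?gt (e (j0 + Suc i)) (x (j0 + Suc i)) (x (Suc (j0 + Suc i)))" using xj[of "j0+Suc i"] by simp
      have "Mv (fst (x (j0 + Suc i))) \<noteq> CC"
        using backtrack_nonC[OF ne _ _ j1 j2] eq noloop[of "j0+i"] unfolding a_def by simp
      then have nc: "Mv (p (j0 + Suc i)) \<noteq> CC" unfolding p_def .
      show False
      proof (cases "\<exists>j<k. Mv (p j) \<noteq> CC")
        case True
        then have ex: "\<exists>j. j < k \<and> Mv (p j) \<noteq> CC" by blast
        have "(SOME j. j < k \<and> Mv (p j) \<noteq> CC) < k \<and> Mv (p (SOME j. j < k \<and> Mv (p j) \<noteq> CC)) \<noteq> CC"
          by (rule someI_ex[OF ex])
        then have j0: "j0 < k \<and> Mv (p j0) \<noteq> CC" unfolding j0_def using True by simp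
        have "p (j0 + Suc i) = p j0" using uniq[OF pV pV nc] j0 by blast
        moreover have "snd (x (j0 + Suc i)) = snd (x j0)" using xF[OF nc] xF[of j0] j0 by simp
        ultimately have "x (j0 + Suc i) = x j0" unfolding p_def by (simp add: prod_eq_iff)
        then have "(j0 + Suc i) mod k = j0 mod k" by (rule xmod)
        then show False using mod_window_inj[of j0 "j0 + Suc i" k j0] i by simp
      next
        case False
        have "p (j0 + Suc i) = p ((j0 + Suc i) mod k)" unfolding p_def using xper by simp
        moreover have "Mv (p ((j0 + Suc i) mod k)) = CC" using False kmod[of "j0 + Suc i"] by blast
        ultimately show False using nc by simp
      qed
    qed
  qed
  have "\<exists>C. is_cycle V A s t C"
  proof (rule closed_walk_cycle[where p="\<lambda>i. p (j0 + i)" and a="\<lambda>i. a (j0 + i)" and k=k])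
    show "1 \<le> k" by (rule k)
    have "x (j0 + k) = x j0" using xper[of "j0+k"] xper[of j0] by simp
    then show "p (j0 + k) = p (j0 + 0)" unfolding p_def by simp
    show "\<forall>i\<le>k. p (j0 + i) \<in> V" using pV by blast
    show "\<forall>i<k. a (j0 + i) \<in> A \<and> joins s t (a (j0 + i)) (p (j0 + i)) (p (j0 + Suc i))"
      using aA pj by simp
    show "\<forall>i. Suc i < k \<longrightarrow> a (j0 + i) \<noteq> a (j0 + Suc i)" by (rule nb)
  qed
  then show False using tree by blast
qed

theorem lemma6p3:
  fixes V :: "'v set" and A :: "'a set" and s t :: "'a \<Rightarrow> 'v"
    and Mv :: "'v \<Rightarrow> divring" and Mconj :: "'a \<Rightarrow> bool"
  assumes "quiver V A s t"
    and "connected_quiver V A s t"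
    and "\<forall>x \<in> gamma_vertices V Mv.
           one_cycle
             (comp_vertices (gamma_vertices V Mv) (gamma_arrows A s t Mv)
                (gamma_src s t Mv Mconj) (gamma_tgt s t Mv Mconj) x)
             (comp_arrows (gamma_vertices V Mv) (gamma_arrows A s t Mv)
                (gamma_src s t Mv Mconj) (gamma_tgt s t Mv Mconj) x)
             (gamma_src s t Mv Mconj) (gamma_tgt s t Mv Mconj)"
  shows "(\<forall>C1 C2. is_cycle V A s t C1 \<longrightarrow> is_cycle V A s t C2 \<longrightarrow> C1 = C2)
     \<and> (is_tree V A s t \<longrightarrow>
         (\<exists>us as. is_chain V A s t us as \<and> length us \<ge> 2 \<and>
            Mv (hd us) \<noteq> CC \<and> Mv (last us) \<noteq> CC \<and>
            (\<forall>i. 1 \<le> i \<and> i < length us - 1 \<longrightarrow> Mv (us ! i) = CC)))"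
proof (intro conjI allI impI)
  fix C1 C2 assume c1: "is_cycle V A s t C1" and c2: "is_cycle V A s t C2"
  obtain v0 where "v0 \<in> V" using assms(2) unfolding connected_quiver_def by blast
  then have z: "(v0, False) \<in> gamma_vertices V Mv" unfolding gamma_vertices_def by blast
  obtain D1 where D1: "is_cycle (comp_vertices (gamma_vertices V Mv) (gamma_arrows A s t Mv) (gamma_src s t Mv Mconj) (gamma_tgt s t Mv Mconj) (v0, False))
       (comp_arrows (gamma_vertices V Mv) (gamma_arrows A s t Mv) (gamma_src s t Mv Mconj) (gamma_tgt s t Mv Mconj) (v0, False))
       (gamma_src s t Mv Mconj) (gamma_tgt s t Mv Mconj) D1" "fst ` D1 = C1"
    using cycle_lifts[OF assms(1,2) z c1, where Mconj=Mconj] by blast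
  obtain D2 where D2: "is_cycle (comp_vertices (gamma_vertices V Mv) (gamma_arrows A s t Mv) (gamma_src s t Mv Mconj) (gamma_tgt s t Mv Mconj) (v0, False))
       (comp_arrows (gamma_vertices V Mv) (gamma_arrows A s t Mv) (gamma_src s t Mv Mconj) (gamma_tgt s t Mv Mconj) (v0, False))
       (gamma_src s t Mv Mconj) (gamma_tgt s t Mv Mconj) D2" "fst ` D2 = C2"
    using cycle_lifts[OF assms(1,2) z c2, where Mconj=Mconj] by blast
  have "one_cycle (comp_vertices (gamma_vertices V Mv) (gamma_arrows A s t Mv) (gamma_src s t Mv Mconj) (gamma_tgt s t Mv Mconj) (v0, False))
       (comp_arrows (gamma_vertices V Mv) (gamma_arrows A s t Mv) (gamma_src s t Mv Mconj) (gamma_tgt s t Mv Mconj) (v0, False))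
       (gamma_src s t Mv Mconj) (gamma_tgt s t Mv Mconj)" using assms(3) z by blast
  then have "D1 = D2" using D1(1) D2(1) unfolding one_cycle_def by blast
  then show "C1 = C2" using D1(2) D2(2) by simp
next
  assume tr: "is_tree V A s t"
  then have "\<forall>C. \<not> is_cycle V A s t C" unfolding is_tree_def by blast
  from tree_two_nonC[OF assms(1,2) this assms(3)]
  obtain r1 r2 where r: "r1 \<in> V" "r2 \<in> V" "r1 \<noteq> r2" "Mv r1 \<noteq> CC" "Mv r2 \<noteq> CC" by blast
  show "\<exists>us as. is_chain V A s t us as \<and> length us \<ge> 2 \<and>
            Mv (hd us) \<noteq> CC \<and> Mv (last us) \<noteq> CC \<and>
            (\<forall>i. 1 \<le> i \<and> i < length us - 1 \<longrightarrow> Mv (us ! i) = CC)"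
    by (rule chain_exists[OF assms(1,2) r])
qed

end
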